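(* There exists a function assigning to each real $x \geq 1$ a positive integer $m = m(x)$ such that: (i) $\varphi(m) \leq x$; (ii) $m = 2^t Q$, where $t \geq 0$ is an integer and $Q$ is an odd squarefree positive integer; and (iii) \[ m(x) \geq \left(\tfrac{1}{2} e^{\gamma} + o(1)\right) x \log\log x \quad \text{as } x \to +\infty, \] i.e., $\liminf_{x\to+\infty} m(x)/(x\log\log x) \geq \tfrac12 e^{\gamma}$.
   Context: $\varphi$ denotes Euler's totient function and $\gamma$ is the Euler--Mascheroni constant. $\log$ is the natural logarithm. *)

theory Defs
  imports "HOL-Analysis.Analysis" "HOL-Number_Theory.Number_Theory" "HOL-Computational_Algebra.Squarefree"
begin

end

theory Submission
  imports Defs "HOL-Real_Asymp.Real_Asymp"
begin

lemma geom_bound: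
  fixes p :: nat assumes "p \<ge> 2"
  shows "(\<Sum>k<M. (1 / real p)^k) \<le> real p / (real p - 1)"
proof -
  have ne: "1 / real p \<noteq> 1" using assms by simp
  have "(\<Sum>k<M. (1 / real p)^k) = (1 - (1/real p)^M) / (1 - 1/real p)"
    using sum_gp_strict[of "1/real p" M] ne assms by auto
  also have "\<dots> \<le> 1 / (1 - 1/real p)"
    using assms by (intro divide_right_mono) (auto simp: field_simps)
  also have "\<dots> = real p / (real p - 1)" using assms by (simp add: field_simps)
  finally show ?thesis .
qed

lemma smooth_sum_le:
  fixes A :: "nat set"
  assumes "finite A" "\<forall>p\<in>A. prime p"
  shows "finite N \<Longrightarrow> (\<forall>n\<in>N. n > 0 \<and> prime_factors n \<subseteq> A) \<Longrightarrow>
         (\<Sum>n\<in>N. 1 / real n) \<le> (\<Prod>p\<in>A. real p / (real p - 1))"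
  using assms
proof (induction A arbitrary: N rule: finite_induct)
  case empty
  have "N \<subseteq> {1}"
  proof
    fix n assume "n \<in> N"
    with empty have "n > 0" "prime_factors n = {}" by auto
    then show "n \<in> {1}" using prime_factorization_empty_iff[of n] by auto
  qed
  then have "(\<Sum>n\<in>N. 1 / real n) \<le> (\<Sum>n\<in>{1}. 1 / real n)"
    by (intro sum_mono2) auto
  then show ?case by simp
next
  case (insert p A)
  have pp: "prime p" using insert by auto
  hence p2: "p \<ge> 2" by (simp add: prime_ge_2_nat)
  define F where "F = (\<Prod>p\<in>A. real p / (real p - 1))"
  have Fnn: "F \<ge> 0" unfolding F_def
  proof (intro prod_nonneg ballI)
    fix a assume "a \<in> A" hence "prime a" using insert.prems by auto
    hence "a \<ge> 2" by (simp add: prime_ge_2_nat)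
    thus "0 \<le> real a / (real a - 1)" by simp
  qed
  define v where "v n = multiplicity p n" for n
  define r where "r n = n div p ^ v n" for n
  have dec: "n = p ^ v n * r n" for n
    unfolding r_def v_def using multiplicity_dvd[of p n] by simp
  have rpos: "r n > 0" if "n \<in> N" for n
    using dec[of n] insert.prems that by (metis gr0I mult_0_right not_gr0)
  have rA: "prime_factors (r n) \<subseteq> A" if "n \<in> N" for n
  proof
    fix q assume q: "q \<in> prime_factors (r n)"
    have "q dvd r n" "prime q" using q by auto
    hence "q dvd n" using dec[of n] by (metis dvd_mult)
    hence "q \<in> prime_factors n" using \<open>prime q\<close> rpos[OF that] dec[of n] insert.prems that
      by (auto simp: in_prime_factors_iff)
    hence "q \<in> insert p A" using insert.prems that by auto
    moreover have "q \<noteq> p"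
    proof
      assume "q = p"
      hence "p dvd n div p ^ multiplicity p n" using \<open>q dvd r n\<close> unfolding r_def v_def by simp
      moreover have "n \<noteq> 0" using insert.prems that by auto
      moreover have "\<not> is_unit p" using pp by auto
      ultimately show False using multiplicity_decompose[of n p] by blast
    qed
    ultimately show "q \<in> A" by auto
  qed
  define Nk where "Nk k = {n \<in> N. v n = k}" for k
  have inner: "(\<Sum>n\<in>Nk k. 1 / real n) \<le> (1 / real p)^k * F" for k
  proof -
    have fin: "finite (Nk k)" using insert.prems unfolding Nk_def by auto
    have "(\<Sum>n\<in>Nk k. 1 / real n) = (\<Sum>n\<in>Nk k. (1 / real p)^k * (1 / real (r n)))"
    proof (intro sum.cong refl)
      fix n assume "n \<in> Nk k"
      hence "n = p^k * r n" using dec[of n] unfolding Nk_def by auto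
      hence "real n = real p ^ k * real (r n)" by (metis of_nat_mult of_nat_power)
      thus "1 / real n = (1 / real p)^k * (1 / real (r n))" by (simp add: power_divide)
    qed
    also have "\<dots> = (1 / real p)^k * (\<Sum>n\<in>Nk k. 1 / real (r n))" by (simp add: sum_distrib_left)
    also have "(\<Sum>n\<in>Nk k. 1 / real (r n)) = (\<Sum>m\<in>r ` Nk k. 1 / real m)"
    proof -
      have "inj_on r (Nk k)"
      proof
        fix a b assume "a \<in> Nk k" "b \<in> Nk k" "r a = r b"
        then show "a = b" using dec[of a] dec[of b] unfolding Nk_def by auto
      qed
      thus ?thesis by (simp add: sum.reindex)
    qed
    also have "(\<Sum>m\<in>r ` Nk k. 1 / real m) \<le> F"
      unfolding F_def
      using insert.IH[of "r ` Nk k"] fin rpos rA insert.prems unfolding Nk_def by auto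
    finally show ?thesis by (simp add: mult_left_mono)
  qed
  have finv: "finite (v ` N)" using insert.prems by auto
  then obtain M where M: "v ` N \<subseteq> {..<M}"
    by (meson finite_nat_iff_bounded)
  have "(\<Sum>n\<in>N. 1 / real n) = (\<Sum>k\<in>v ` N. \<Sum>n\<in>Nk k. 1 / real n)"
    unfolding Nk_def using sum.group[OF insert.prems(1) finv, of v "\<lambda>n. 1 / real n"] by simp
  also have "\<dots> \<le> (\<Sum>k\<in>v ` N. (1 / real p)^k * F)"
    by (intro sum_mono inner)
  also have "\<dots> \<le> (\<Sum>k<M. (1 / real p)^k * F)"
    using M by (intro sum_mono2) (auto intro!: mult_nonneg_nonneg Fnn)
  also have "\<dots> = (\<Sum>k<M. (1 / real p)^k) * F" by (simp add: sum_distrib_right)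
  also have "\<dots> \<le> real p / (real p - 1) * F"
    using geom_bound[OF p2, of M] by (intro mult_right_mono) (use Fnn in auto)
  also have "\<dots> = (\<Prod>p\<in>insert p A. real p / (real p - 1))"
    unfolding F_def using insert by simp
  finally show ?case .
qed

lemma ln_le_prod:
  fixes y :: nat
  shows "ln (real y + 1) \<le> (\<Prod>p\<in>{p. prime p \<and> p \<le> y}. real p / (real p - 1))"
proof -
  have "ln (real y + 1) \<le> harm y" by (rule harm_ge_ln)
  also have "harm y = (\<Sum>n\<in>{1..y}. 1 / real n)" by (simp add: harm_def inverse_eq_divide)
  also have "\<dots> \<le> (\<Prod>p\<in>{p. prime p \<and> p \<le> y}. real p / (real p - 1))"
  proof (rule smooth_sum_le)
    show "\<forall>n\<in>{1..y}. 0 < n \<and> prime_factors n \<subseteq> {p. prime p \<and> p \<le> y}"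
    proof
      fix n assume n: "n \<in> {1..y}"
      have "prime_factors n \<subseteq> {p. prime p \<and> p \<le> y}"
      proof
        fix q assume "q \<in> prime_factors n"
        hence "prime q" "q dvd n" by auto
        moreover have "q \<le> n" using n \<open>q dvd n\<close> by (intro dvd_imp_le) auto
        ultimately show "q \<in> {p. prime p \<and> p \<le> y}" using n by auto
      qed
      thus "0 < n \<and> prime_factors n \<subseteq> {p. prime p \<and> p \<le> y}" using n by auto
    qed
  qed auto
  finally show ?thesis .
qed

lemma prod_primes_facts:
  fixes B :: "nat set"
  assumes "finite B" "\<forall>p\<in>B. prime p"
  shows "totient (\<Prod>B) = (\<Prod>p\<in>B. p - 1) \<and> squarefree (\<Prod>B) \<and> ((\<forall>p\<in>B. odd p) \<longrightarrow> odd (\<Prod>B))"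
  using assms
proof (induction B rule: finite_induct)
  case empty
  then show ?case by auto
next
  case (insert p B)
  have pp: "prime p" using insert by auto
  have "\<not> p dvd \<Prod>B"
  proof
    assume "p dvd \<Prod>B"
    then obtain q where "q \<in> B" "p dvd q" using prime_dvd_prod_iff[OF insert.hyps(1) pp, of id] by auto
    hence "p = q" using primes_dvd_imp_eq[OF pp] insert.prems by auto
    thus False using \<open>q \<in> B\<close> insert.hyps by auto
  qed
  hence cop: "coprime p (\<Prod>B)" using prime_imp_coprime[OF pp] by auto
  have eq: "\<Prod>(insert p B) = p * \<Prod>B" using insert.hyps by simp
  show ?case
    unfolding eq using insert cop pp
    by (auto simp: totient_mult_coprime totient_prime squarefree_mult_coprime squarefree_prime)
qed

lemma fill:
  fixes z :: real assumes "z \<ge> 1"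
  shows "\<exists>g\<in>{1::nat,138,148,162,178,192,210,226,240}. \<exists>j::nat. 9/10*z \<le> 2^j / real g \<and> 2^j / real g \<le> z"
proof -
  obtain k where k: "2^k \<le> nat \<lfloor>z\<rfloor>" "nat \<lfloor>z\<rfloor> < (2::nat)^(k+1)"
  proof -
    have "\<exists>k. 2^k \<le> nat \<lfloor>z\<rfloor> \<and> nat \<lfloor>z\<rfloor> < (2::nat)^(k+1)"
    proof (rule ex_power_ivl1)
      have "1 \<le> \<lfloor>z\<rfloor>" using assms by (simp add: le_floor_iff)
      thus "1 \<le> nat \<lfloor>z\<rfloor>" by linarith
    qed simp
    thus ?thesis using that by blast
  qed
  define P :: real where "P = 2^k"
  have Ppos: "P > 0" unfolding P_def by simp
  have nz: "real (nat \<lfloor>z\<rfloor>) = of_int \<lfloor>z\<rfloor>" using assms by simp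
  have f1: "of_int \<lfloor>z\<rfloor> \<le> z" "z < of_int \<lfloor>z\<rfloor> + 1"
    by (rule of_int_floor_le, rule real_of_int_floor_add_one_gt)
  have "real (2^k) \<le> real (nat \<lfloor>z\<rfloor>)" using k(1) by (simp only: of_nat_le_iff)
  hence "(2::real)^k \<le> real (nat \<lfloor>z\<rfloor>)" by (simp only: of_nat_power of_nat_numeral)
  hence z1: "P \<le> z" unfolding P_def using nz f1 by linarith
  have "nat \<lfloor>z\<rfloor> + 1 \<le> 2 * 2^k" using k(2) by simp
  hence "real (nat \<lfloor>z\<rfloor> + 1) \<le> real (2 * 2^k)" by (simp only: of_nat_le_iff)
  hence "real (nat \<lfloor>z\<rfloor>) + 1 \<le> 2 * (2::real)^k" by (simp only: of_nat_add of_nat_mult of_nat_power of_nat_numeral of_nat_1)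
  hence z2: "z < 2 * P" unfolding P_def using nz f1 by linarith
  have pick: "\<exists>j::nat. 9/10*z \<le> 2^j / real g \<and> 2^j / real g \<le> z"
    if "256 / real g * P \<le> z" "z \<le> 2560 / (9 * real g) * P" "g > 0" for g :: nat
  proof (intro exI[of _ "k+8"])
    have e: "(2::real)^(k+8) / real g = 256 / real g * P" unfolding P_def by (simp add: power_add)
    show "9/10*z \<le> 2^(k+8) / real g \<and> 2^(k+8) / real g \<le> z"
      unfolding e using that by (auto simp: field_simps)
  qed
  have "z \<le> 10/9*P \<or> (256/240*P \<le> z \<and> z \<le> 2560/(9*240)*P) \<or> (256/226*P \<le> z \<and> z \<le> 2560/(9*226)*P)
     \<or> (256/210*P \<le> z \<and> z \<le> 2560/(9*210)*P) \<or> (256/192*P \<le> z \<and> z \<le> 2560/(9*192)*P)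
     \<or> (256/178*P \<le> z \<and> z \<le> 2560/(9*178)*P) \<or> (256/162*P \<le> z \<and> z \<le> 2560/(9*162)*P)
     \<or> (256/148*P \<le> z \<and> z \<le> 2560/(9*148)*P) \<or> (256/138*P \<le> z \<and> z \<le> 2560/(9*138)*P)"
    using z1 z2 Ppos by linarith
  then show ?thesis
  proof (elim disjE)
    assume "z \<le> 10/9*P"
    hence "9/10*z \<le> 2^k / real (1::nat) \<and> 2^k / real (1::nat) \<le> z" using z1 unfolding P_def by simp
    thus ?thesis by blast
  qed (use pick[of 240] pick[of 226] pick[of 210] pick[of 192] pick[of 178] pick[of 162] pick[of 148] pick[of 138] in auto)
qed

lemma prime_by_sqrt:
  fixes p k :: nat
  assumes "p > 1" "list_all (\<lambda>d. \<not> d dvd p) [2..<k+1]" "p < (k+1)*(k+1)"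
  shows "prime p"
  unfolding prime_nat_iff'
proof (intro conjI ballI notI)
  have A: "\<not> d dvd p" if "2 \<le> d" "d \<le> k" for d
    using assms(2) that by (auto simp: list_all_iff)
  show "p > 1" by fact
  fix n assume n: "n \<in> {2..<p}" "n dvd p"
  then obtain m where m: "p = n * m" by auto
  have "n > k" using A n by force
  have "m dvd p" using m by simp
  have "m \<noteq> 0"
  proof assume "m = 0" thus False using m assms(1) by simp qed
  have "m \<noteq> 1" using m n by auto
  have "m > k"
  proof (rule ccontr)
    assume "\<not> k < m" hence "2 \<le> m" "m \<le> k" using \<open>m \<noteq> 0\<close> \<open>m \<noteq> 1\<close> by auto
    thus False using A \<open>m dvd p\<close> by blast
  qed
  have "(k+1)*(k+1) \<le> n * m" using \<open>n > k\<close> \<open>m > k\<close> by (intro mult_mono) auto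
  thus False using m assms(3) by simp
qed

lemma special_primes: "\<forall>g\<in>{138::nat,148,162,178,192,210,226,240}. prime (g+1)"
proof -
  have "prime (139::nat)" by (rule prime_by_sqrt[where k=11]) (simp_all add: upt_rec)
  moreover have "prime (149::nat)" by (rule prime_by_sqrt[where k=12]) (simp_all add: upt_rec)
  moreover have "prime (163::nat)" by (rule prime_by_sqrt[where k=12]) (simp_all add: upt_rec)
  moreover have "prime (179::nat)" by (rule prime_by_sqrt[where k=13]) (simp_all add: upt_rec)
  moreover have "prime (193::nat)" by (rule prime_by_sqrt[where k=13]) (simp_all add: upt_rec)
  moreover have "prime (211::nat)" by (rule prime_by_sqrt[where k=14]) (simp_all add: upt_rec)
  moreover have "prime (227::nat)" by (rule prime_by_sqrt[where k=15]) (simp_all add: upt_rec)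
  moreover have "prime (241::nat)" by (rule prime_by_sqrt[where k=15]) (simp_all add: upt_rec)
  ultimately show ?thesis by simp
qed

lemma construct:
  fixes x :: real and y :: nat
  assumes y: "y \<ge> 241" and xy: "real y ^ y \<le> x"
  shows "\<exists>m::nat. m > 0 \<and> real (totient m) \<le> x \<and>
           (\<exists>t Q :: nat. m = 2 ^ t * Q \<and> odd Q \<and> squarefree Q \<and> Q > 0) \<and>
           117/131 * x * ln (real y + 1) \<le> real m"
proof -
  define A where "A = {p::nat. prime p \<and> 2 < p \<and> p \<le> y}"
  have finA: "finite A" unfolding A_def by (rule finite_subset[of _ "{..y}"]) auto
  have primA: "\<forall>p\<in>A. prime p" and gt2A: "\<forall>p\<in>A. p > 2" unfolding A_def by auto
  define Phi where "Phi = (\<Prod>p\<in>A. real p - 1)"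
  have Phipos: "Phi > 0" unfolding Phi_def using gt2A by (intro prod_pos) auto
  have "Phi \<le> (\<Prod>p\<in>A. real y)" unfolding Phi_def
    using gt2A by (intro prod_mono) (auto simp: A_def)
  also have "\<dots> = real y ^ card A" by simp
  also have "\<dots> \<le> real y ^ y"
  proof (rule power_increasing)
    have "A \<subseteq> {1..y}" unfolding A_def by auto
    from card_mono[OF _ this] show "card A \<le> y" by simp
  qed (use y in simp)
  finally have Phile: "Phi \<le> x" using xy by linarith
  define z where "z = x / Phi"
  have z1: "z \<ge> 1" unfolding z_def using Phile Phipos by simp
  obtain g j where g: "g \<in> {1::nat,138,148,162,178,192,210,226,240}"
    and j: "9/10*z \<le> 2^j / real g" "2^j / real g \<le> z"
    using fill[OF z1] by blast
  have gpos: "g > 0" using g by auto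
  define S where "S = (if g = 1 then {} else {g+1})"
  have SA: "S \<subseteq> A"
  proof (cases "g = 1")
    case False
    hence "prime (g+1)" using special_primes g by auto
    moreover have "g + 1 \<le> y" "2 < g + 1" using g y False by auto
    ultimately show ?thesis using False unfolding S_def A_def by auto
  qed (simp add: S_def)
  define B where "B = A - S"
  have finB: "finite B" unfolding B_def using finA by auto
  have primB: "\<forall>p\<in>B. prime p" and gt2B: "\<forall>p\<in>B. p > 2" unfolding B_def using primA gt2A by auto
  have oddB: "\<forall>p\<in>B. odd p" using primB gt2B prime_odd_nat by blast
  define Q where "Q = \<Prod>B"
  from prod_primes_facts[OF finB primB] oddB
  have totQ: "totient Q = (\<Prod>p\<in>B. p - 1)" and sqQ: "squarefree Q" and oddQ: "odd Q"
    unfolding Q_def by auto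
  have Qpos: "Q > 0" using oddQ by (cases Q) auto
  define m where "m = 2^(j+1) * Q"
  have cop: "coprime (2^(j+1)) Q" using oddQ by simp
  have totm: "totient m = 2^j * (\<Prod>p\<in>B. p - 1)"
  proof -
    have "totient (2^(Suc j)) = 2^j * (2 - 1)" by (rule totient_prime_power_Suc) simp
    thus ?thesis unfolding m_def totient_mult_coprime[OF cop] totQ by simp
  qed
  define T where "T = (\<Prod>p\<in>B. real p - 1)"
  have Tpos: "T > 0" unfolding T_def using gt2B by (intro prod_pos) auto
  have rtot: "real (totient m) = 2^j * T"
  proof -
    have "(\<Prod>x\<in>B. real (x - 1)) = T" unfolding T_def using gt2B by (intro prod.cong) (auto simp: of_nat_diff)
    thus ?thesis unfolding totm by (simp add: of_nat_prod)
  qed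
  have PhiT: "Phi = real g * T"
  proof (cases "g = 1")
    case True thus ?thesis unfolding Phi_def T_def B_def S_def by simp
  next
    case False
    hence "g + 1 \<in> A" using SA unfolding S_def by auto
    hence "Phi = (real (g+1) - 1) * T"
      unfolding Phi_def T_def B_def S_def using False finA by (simp add: prod.remove)
    thus ?thesis by simp
  qed
  have tot_eq: "real (totient m) = 2^j / real g * Phi" using rtot PhiT gpos by simp
  have xeq: "x = z * Phi" unfolding z_def using Phipos by simp
  have totle: "real (totient m) \<le> x"
    unfolding tot_eq xeq using j(2) Phipos by (intro mult_right_mono) auto
  have totge: "9/10 * x \<le> real (totient m)"
  proof -
    have "(9/10*z) * Phi \<le> (2^j / real g) * Phi" using j(1) Phipos by (intro mult_right_mono) auto
    thus ?thesis unfolding tot_eq xeq by simp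
  qed
  define R where "R = (\<Prod>p\<in>B. real p / (real p - 1))"
  have Rpos: "R > 0" unfolding R_def using gt2B by (intro prod_pos) auto
  have mR: "real m = 2 * R * real (totient m)"
  proof -
    have "(\<Prod>p\<in>B. real p) = R * T"
      unfolding R_def T_def prod.distrib[symmetric] using gt2B by (intro prod.cong) auto
    moreover have "real m = 2^(j+1) * (\<Prod>p\<in>B. real p)" unfolding m_def Q_def by (simp add: of_nat_prod)
    ultimately show ?thesis unfolding rtot by simp
  qed
  have primes_eq: "{p. prime p \<and> p \<le> y} = insert 2 A" unfolding A_def using y prime_ge_2_nat
    by (auto simp: order.order_iff_strict)
  have "ln (real y + 1) \<le> (\<Prod>p\<in>insert 2 A. real p / (real p - 1))"
    using ln_le_prod[of y] unfolding primes_eq .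
  also have "\<dots> = 2 * (\<Prod>p\<in>A. real p / (real p - 1))" using finA by (simp add: A_def)
  also have "(\<Prod>p\<in>A. real p / (real p - 1)) \<le> 131/130 * R"
  proof (cases "g = 1")
    case True thus ?thesis unfolding R_def B_def S_def using Rpos R_def B_def S_def by simp
  next
    case False
    hence "g + 1 \<in> A" using SA unfolding S_def by auto
    hence "(\<Prod>p\<in>A. real p / (real p - 1)) = real (g+1) / (real (g+1) - 1) * R"
      unfolding R_def B_def S_def using False finA by (simp add: prod.remove)
    also have "real (g+1) / (real (g+1) - 1) \<le> 131/130"
      using g False by (auto simp: field_simps)
    finally show ?thesis using Rpos by (simp add: mult_right_mono)
  qed
  finally have lnR: "ln (real y + 1) \<le> 2 * (131/130 * R)" by simp
  have lnnn: "ln (real y + 1) \<ge> 0" by simp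
  have "117/131 * x * ln (real y + 1) = (9/10 * x) * (130/131 * ln (real y + 1))" by simp
  also have "\<dots> \<le> real (totient m) * (2 * R)"
  proof (rule mult_mono[OF totge])
    show "130/131 * ln (real y + 1) \<le> 2 * R" using lnR by linarith
  qed (use lnnn in auto)
  also have "\<dots> = real m" using mR by simp
  finally have mbound: "117/131 * x * ln (real y + 1) \<le> real m" .
  have "\<exists>t Q' :: nat. m = 2 ^ t * Q' \<and> odd Q' \<and> squarefree Q' \<and> Q' > 0"
    using Qpos oddQ sqQ unfolding m_def by blast
  moreover have "m > 0" unfolding m_def using Qpos by simp
  ultimately show ?thesis using mbound totle by blast
qed

lemma gamma_bound: "exp (euler_mascheroni::real) < 234/131"
proof -
  have l2: "ln (2::real) \<ge> 2*(1/3 + 1/81 + 1/1215)"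
    using ln_approx_bounds(1)[of 2 3] by (simp add: eval_nat_numeral)
  have "ln (32::real) = 5 * ln 2" by (simp add: ln_powr[symmetric])
  have u: "euler_mascheroni \<le> harm 31 - ln (32::real) + 1/62"
    using euler_mascheroni_upper[of 30] by simp
  have h: "harm 31 = (\<Sum>k=1..31. 1 / real k)" by (simp add: harm_def inverse_eq_divide)
  have lb: "ln (234/131::real) \<ge> 2*(103/365 + (103/365)^3/3 + (103/365)^5/5)"
    using ln_approx_bounds(1)[of "234/131" 3] by (simp add: eval_nat_numeral)
  have "euler_mascheroni < ln (234/131::real)"
    using u l2 lb \<open>ln 32 = _\<close> unfolding h by (simp add: eval_nat_numeral)
  then show ?thesis by (metis exp_less_cancel_iff exp_ln zero_less_divide_iff zero_less_numeral)
qed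

lemma asy1: "(\<lambda>x::real. ln(ln(ln x))) \<in> o(\<lambda>x. ln(ln x))" by real_asymp
lemma asy2: "filterlim (\<lambda>x::real. ln x / ln (ln x)) at_top at_top" by real_asymp


theorem lemma2:
  shows "\<exists>m :: real \<Rightarrow> nat.
     (\<forall>x \<ge> 1. m x > 0 \<and> real (totient (m x)) \<le> x \<and>
        (\<exists>t Q :: nat. m x = 2 ^ t * Q \<and> odd Q \<and> squarefree Q \<and> Q > 0)) \<and>
     (\<forall>\<epsilon> > 0. eventually
        (\<lambda>x. real (m x) \<ge> (exp euler_mascheroni / 2 - \<epsilon>) * x * ln (ln x)) at_top)"
proof -
  define yy where "yy x = nat \<lfloor>ln x / ln (ln x)\<rfloor>" for x :: real
  have pw: "241 \<le> yy x \<and> real (yy x) ^ yy x \<le> x \<and> ln (ln x) - ln (ln (ln x)) \<le> ln (real (yy x) + 1)"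
    if x: "x \<ge> exp (exp 1)" and q: "ln x / ln (ln x) \<ge> 242" for x :: real
  proof -
    define L where "L = ln x"
    define LL where "LL = ln L"
    have xpos: "x > 0" using x by (metis exp_gt_zero less_le_trans)
    have "L \<ge> exp 1" unfolding L_def using x xpos by (metis exp_le_cancel_iff exp_ln)
    hence Lpos: "L > 0" by (metis exp_gt_zero less_le_trans)
    have LL1: "LL \<ge> 1" unfolding LL_def using \<open>L \<ge> exp 1\<close> Lpos by (metis exp_le_cancel_iff exp_ln)
    have q': "L / LL \<ge> 242" using q unfolding L_def LL_def .
    define Y where "Y = real (yy x)"
    have fl: "Y \<le> L / LL" "L / LL < Y + 1"
      unfolding Y_def yy_def L_def[symmetric] LL_def[symmetric] using q' by linarith+
    have Yge: "Y \<ge> 241" unfolding Y_def yy_def L_def[symmetric] LL_def[symmetric] using q' by linarith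
    hence y241: "241 \<le> yy x" unfolding Y_def by simp
    have LLpos: "LL > 0" using LL1 by simp
    have lnq: "ln (L / LL) = LL - ln LL" unfolding LL_def using Lpos LLpos LL_def by (simp add: ln_div)
    have lnLL: "ln LL \<ge> 0" using LL1 by simp
    have "ln Y \<le> ln (L / LL)" using fl Yge by simp
    also have "\<dots> \<le> LL" using lnq lnLL by simp
    finally have lnY: "ln Y \<le> LL" .
    have "ln (Y ^ yy x) = Y * ln Y" using Yge by (simp add: ln_realpow Y_def)
    also have "\<dots> \<le> (L / LL) * LL" using fl lnY Yge LLpos
      by (intro mult_mono) auto
    also have "\<dots> = ln x" using LLpos unfolding L_def by simp
    finally have "Y ^ yy x \<le> x" using Yge xpos by (simp add: ln_le_cancel_iff)
    moreover have "ln (L / LL) \<le> ln (Y + 1)" using fl q' by simp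
    ultimately show ?thesis using y241 lnq unfolding Y_def L_def LL_def by simp
  qed
  have "\<forall>Z. eventually (\<lambda>x::real. Z \<le> ln x / ln (ln x)) at_top" using filterlim_at_top[THEN iffD1, OF asy2] .
  hence "eventually (\<lambda>x::real. 242 \<le> ln x / ln (ln x)) at_top" by blast
  moreover have "eventually (\<lambda>x::real. x \<ge> exp (exp 1)) at_top" by (rule eventually_ge_at_top)
  ultimately have "eventually (\<lambda>x. 241 \<le> yy x \<and> real (yy x) ^ yy x \<le> x \<and>
      ln (ln x) - ln (ln (ln x)) \<le> ln (real (yy x) + 1)) at_top"
    by eventually_elim (use pw in blast)
  then obtain X0 where X0: "\<And>x. x \<ge> X0 \<Longrightarrow> 241 \<le> yy x \<and> real (yy x) ^ yy x \<le> x \<and>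
      ln (ln x) - ln (ln (ln x)) \<le> ln (real (yy x) + 1)"
    by (auto simp: eventually_at_top_linorder)
  define X1 where "X1 = max X0 1"
  have "\<forall>x. \<exists>k::nat. (x \<ge> 1 \<longrightarrow> k > 0 \<and> real (totient k) \<le> x \<and>
          (\<exists>t Q :: nat. k = 2 ^ t * Q \<and> odd Q \<and> squarefree Q \<and> Q > 0)) \<and>
          (x \<ge> X1 \<longrightarrow> 117/131 * x * ln (real (yy x) + 1) \<le> real k)"
  proof
    fix x :: real
    show "\<exists>k::nat. (x \<ge> 1 \<longrightarrow> k > 0 \<and> real (totient k) \<le> x \<and>
          (\<exists>t Q :: nat. k = 2 ^ t * Q \<and> odd Q \<and> squarefree Q \<and> Q > 0)) \<and>
          (x \<ge> X1 \<longrightarrow> 117/131 * x * ln (real (yy x) + 1) \<le> real k)"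
    proof (cases "x \<ge> X1")
      case True
      hence "x \<ge> X0" unfolding X1_def by simp
      from X0[OF this] construct[of "yy x" x] show ?thesis using True by blast
    next
      case False
      have "(1::nat) = 2^0 * 1" by simp
      hence "\<exists>t Q :: nat. (1::nat) = 2 ^ t * Q \<and> odd Q \<and> squarefree Q \<and> Q > 0" by fastforce
      thus ?thesis using False by (intro exI[of _ 1]) auto
    qed
  qed
  then obtain m where m: "\<And>x. (x \<ge> 1 \<longrightarrow> m x > 0 \<and> real (totient (m x)) \<le> x \<and>
          (\<exists>t Q :: nat. m x = 2 ^ t * Q \<and> odd Q \<and> squarefree Q \<and> Q > 0)) \<and>
          (x \<ge> X1 \<longrightarrow> 117/131 * x * ln (real (yy x) + 1) \<le> real (m x))"
    by metis
  show ?thesis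
  proof (rule exI[of _ m], rule conjI)
    show "\<forall>x \<ge> 1. m x > 0 \<and> real (totient (m x)) \<le> x \<and>
        (\<exists>t Q :: nat. m x = 2 ^ t * Q \<and> odd Q \<and> squarefree Q \<and> Q > 0)" using m by blast
  next
    show "\<forall>\<epsilon> > 0. eventually
        (\<lambda>x. real (m x) \<ge> (exp euler_mascheroni / 2 - \<epsilon>) * x * ln (ln x)) at_top"
    proof (intro allI impI)
    fix \<epsilon> :: real assume "\<epsilon> > 0"
    define a :: real where "a = exp euler_mascheroni / 2"
    define c :: real where "c = 117/131"
    have ac: "a < c" using gamma_bound unfolding a_def c_def by simp
    define \<delta> where "\<delta> = (c - a) / c"
    have dpos: "\<delta> > 0" unfolding \<delta>_def c_def using ac c_def by simp
    have e1: "eventually (\<lambda>x::real. norm (ln (ln (ln x))) \<le> \<delta> * norm (ln (ln x))) at_top"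
      using landau_o.smallD[OF asy1 dpos] .
    have e2: "eventually (\<lambda>x::real. x \<ge> max X1 (exp (exp 1))) at_top" by (rule eventually_ge_at_top)
    show "eventually (\<lambda>x. real (m x) \<ge> (exp euler_mascheroni / 2 - \<epsilon>) * x * ln (ln x)) at_top"
      using e1 e2
    proof eventually_elim
      case (elim x)
      have xX1: "x \<ge> X1" and xe: "x \<ge> exp (exp 1)" using elim(2) by auto
      have xX0: "x \<ge> X0" using xX1 unfolding X1_def by simp
      have xpos: "x > 0" using xe by (metis exp_gt_zero less_le_trans)
      have "ln x \<ge> exp 1" using xe xpos by (metis exp_le_cancel_iff exp_ln)
      hence Lpos: "ln x > 0" by (metis exp_gt_zero less_le_trans)
      have LL1: "ln (ln x) \<ge> 1" using \<open>ln x \<ge> exp 1\<close> Lpos by (metis exp_le_cancel_iff exp_ln)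
      have lnLL: "ln (ln (ln x)) \<ge> 0" using LL1 by simp
      have sm: "ln (ln (ln x)) \<le> \<delta> * ln (ln x)" using elim(1) lnLL LL1 by simp
      have "real (m x) \<ge> c * x * ln (real (yy x) + 1)" using m[of x] xX1 unfolding c_def by blast
      moreover have "ln (real (yy x) + 1) \<ge> (1 - \<delta>) * ln (ln x)"
        using X0[OF xX0] sm by (simp add: algebra_simps)
      ultimately have "real (m x) \<ge> c * x * ((1 - \<delta>) * ln (ln x))"
        using xpos unfolding c_def by (smt (verit) mult_left_mono mult_pos_pos zero_less_divide_iff)
      also have "c * x * ((1 - \<delta>) * ln (ln x)) = a * x * ln (ln x)"
        unfolding \<delta>_def c_def by (simp add: field_simps)
      also have "a * x * ln (ln x) \<ge> (a - \<epsilon>) * x * ln (ln x)"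
        using \<open>\<epsilon> > 0\<close> xpos LL1 by (intro mult_right_mono) auto
      finally show ?case unfolding a_def by simp
    qed
  qed
qed
qed

end
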